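(* Let $G$ be a finite connected graph in which no edge joins two vertices that both have degree at least $3$, and let $K>0$. Then every stable fixed point $\theta$ of the Kuramoto model on $G$ (as in the context) satisfies $\Delta_{ij}\in[-\pi/2,\pi/2]$ for every edge $\langle ij\rangle$ of $G$.
   Context: The Kuramoto model on $G$ with vertices $1,\dots,n$ is $\dot\theta_i=-K\sum_{j\sim i}\sin(\theta_i-\theta_j)$, where $j\sim i$ means $j$ is adjacent to $i$. A fixed point is $\theta\in\mathbb{R}^n$ with $\sum_{j\sim i}\sin(\theta_i-\theta_j)=0$ for all $i$. For adjacent $i,j$, $\Delta_{ij}$ is $\theta_i-\theta_j$ reduced modulo $2\pi$ into $(-\pi,\pi]$. The stability matrix $M$ has entries $M_{ij}=K\cos(\theta_i-\theta_j)$ if $i\sim j$, $M_{ii}=-\sum_{k\sim i}K\cos(\theta_i-\theta_k)$, and $0$ otherwise; a fixed point is stable if $M$ is negative semidefinite. *)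

theory Defs
  imports "HOL-Analysis.Analysis"
begin

definition simple_graph :: "nat \<Rightarrow> (nat \<Rightarrow> nat \<Rightarrow> bool) \<Rightarrow> bool" where
  "simple_graph n E \<longleftrightarrow>
     (\<forall>i j. E i j \<longrightarrow> i < n \<and> j < n) \<and>
     (\<forall>i j. E i j \<longrightarrow> E j i) \<and> (\<forall>i. \<not> E i i)"

definition graph_connected :: "nat \<Rightarrow> (nat \<Rightarrow> nat \<Rightarrow> bool) \<Rightarrow> bool" where
  "graph_connected n E \<longleftrightarrow> (\<forall>i<n. \<forall>j<n. E\<^sup>*\<^sup>* i j)"

definition degree :: "nat \<Rightarrow> (nat \<Rightarrow> nat \<Rightarrow> bool) \<Rightarrow> nat \<Rightarrow> nat" where
  "degree n E i = card {j. j < n \<and> E i j}"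

definition kuramoto_fixed_point :: "nat \<Rightarrow> (nat \<Rightarrow> nat \<Rightarrow> bool) \<Rightarrow> (nat \<Rightarrow> real) \<Rightarrow> bool" where
  "kuramoto_fixed_point n E \<theta> \<longleftrightarrow>
     (\<forall>i<n. (\<Sum>j\<in>{j. j < n \<and> E i j}. sin (\<theta> i - \<theta> j)) = 0)"

definition stab_matrix :: "nat \<Rightarrow> (nat \<Rightarrow> nat \<Rightarrow> bool) \<Rightarrow> real \<Rightarrow> (nat \<Rightarrow> real) \<Rightarrow> nat \<Rightarrow> nat \<Rightarrow> real" where
  "stab_matrix n E K \<theta> i j =
     (if i = j then - (\<Sum>k\<in>{k. k < n \<and> E i k}. K * cos (\<theta> i - \<theta> k))
      else if E i j then K * cos (\<theta> i - \<theta> j) else 0)"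

definition neg_semidef :: "nat \<Rightarrow> (nat \<Rightarrow> nat \<Rightarrow> real) \<Rightarrow> bool" where
  "neg_semidef n M \<longleftrightarrow> (\<forall>x :: nat \<Rightarrow> real. (\<Sum>i<n. \<Sum>j<n. x i * M i j * x j) \<le> 0)"

definition kuramoto_stable :: "nat \<Rightarrow> (nat \<Rightarrow> nat \<Rightarrow> bool) \<Rightarrow> real \<Rightarrow> (nat \<Rightarrow> real) \<Rightarrow> bool" where
  "kuramoto_stable n E K \<theta> \<longleftrightarrow> neg_semidef n (stab_matrix n E K \<theta>)"

definition wrap_angle :: "real \<Rightarrow> real" where
  "wrap_angle x = x - 2 * pi * of_int \<lceil>(x - pi) / (2 * pi)\<rceil>"

lemma wrap_angle_range: "- pi < wrap_angle x \<and> wrap_angle x \<le> pi"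
proof -
  define c where "c = \<lceil>(x - pi) / (2 * pi)\<rceil>"
  have "(x - pi) / (2*pi) \<le> c" "c < (x - pi) / (2*pi) + 1" unfolding c_def by linarith+
  then have "x - pi \<le> 2*pi*c" "2*pi*c < x + pi" using pi_gt_zero by (simp_all add: field_simps)
  then show ?thesis unfolding wrap_angle_def c_def[symmetric] by linarith
qed

end

theory Submission
  imports Defs
begin

lemma wrap_cos: "cos (wrap_angle x) = cos x"
proof -
  have "cos (x - of_int m * (2*pi)) = cos x" for m :: int
    by (metis cos_diff cos_int_2pin sin_int_2pin mult.commute mult_zero_right add_0_right mult_1_right)
  then show ?thesis unfolding wrap_angle_def by (metis mult.commute mult.assoc)
qed

lemma wrap_ok:
  assumes "cos x \<ge> 0" shows "wrap_angle x \<in> {- pi / 2 .. pi / 2}"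
proof -
  let ?w = "wrap_angle x"
  have r: "- pi < ?w" "?w \<le> pi" using wrap_angle_range by auto
  have c: "cos ?w \<ge> 0" using assms wrap_cos by simp
  have "?w \<le> pi/2"
  proof (rule ccontr)
    assume "\<not> ?w \<le> pi/2"
    then have "cos ?w < 0" using r by (intro cos_lt_zero_pi) auto
    then show False using c by simp
  qed
  moreover have "- (pi/2) \<le> ?w"
  proof (rule ccontr)
    assume "\<not> - (pi/2) \<le> ?w"
    then have "cos (- ?w) < 0" using r by (intro cos_lt_zero_pi) auto
    then show False using c by simp
  qed
  ultimately show ?thesis by auto
qed

lemma sum_sparse:
  fixes g :: "nat \<Rightarrow> real"
  assumes "i < n" "j < n" "i \<noteq> j"
  shows "(\<Sum>l<n. (if l = i then 1 else if l = j then t else 0) * g l) = g i + t * g j"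
proof -
  have "(\<Sum>l<n. (if l = i then 1 else if l = j then t else 0) * g l)
      = (\<Sum>l<n. (if l = i then g i else 0) + (if l = j then t * g j else 0))"
    by (rule sum.cong) (use assms in auto)
  also have "\<dots> = g i + t * g j" using assms by (simp add: sum.distrib)
  finally show ?thesis .
qed

lemma key:
  assumes sg: "simple_graph n E"
    and K: "K > 0"
    and fp: "kuramoto_fixed_point n E \<theta>"
    and st: "kuramoto_stable n E K \<theta>"
    and eij: "E i j" and deg: "degree n E i \<le> 2"
    and neg: "cos (\<theta> i - \<theta> j) < 0"
  shows False
proof -
  define M where "M = stab_matrix n E K \<theta>"
  define S where "S = {k. k < n \<and> E i k}"
  define c where "c = cos (\<theta> i - \<theta> j)"
  have ij: "i < n" "j < n" "i \<noteq> j" using sg eij unfolding simple_graph_def by metis+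
  have fin: "finite S" unfolding S_def by auto
  have jS: "j \<in> S" unfolding S_def using ij eij by auto
  have cS: "card S \<le> 2" using deg unfolding degree_def S_def by simp
  have fpi: "(\<Sum>k\<in>S. sin (\<theta> i - \<theta> k)) = 0" using fp ij unfolding kuramoto_fixed_point_def S_def by auto
  have Mii: "M i i = - (\<Sum>k\<in>S. K * cos (\<theta> i - \<theta> k))" unfolding M_def stab_matrix_def S_def by simp
  have csum: "(\<Sum>k\<in>S. cos (\<theta> i - \<theta> k)) \<le> 0"
  proof -
    have "card S \<ge> 1" using fin jS by (metis One_nat_def Suc_leI card_gt_0_iff empty_iff)
    then consider "card S = 1" | "card S = 2" using cS by linarith
    then show ?thesis
    proof cases
      case 1
      then have "S = {j}" using jS by (metis card_1_singletonE singletonD)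
      then show ?thesis using neg by simp
    next
      case 2
      then obtain k where Sk: "S = {j, k}" "k \<noteq> j" using jS
        by (metis card_2_iff insert_commute insert_iff singletonD)
      define a where "a = \<theta> i - \<theta> j"
      define b where "b = \<theta> i - \<theta> k"
      have sab: "sin a + sin b = 0" using fpi Sk unfolding a_def b_def by simp
      have "(cos b)^2 = (cos a)^2"
      proof -
        have "(sin b)^2 = (sin a)^2" using sab by (metis add_eq_0_iff2 power2_minus)
        then show ?thesis by (metis cos_squared_eq)
      qed
      then have "cos b = cos a \<or> cos b = - cos a" by (metis power2_eq_iff)
      moreover have "cos a < 0" using neg a_def by simp
      ultimately have "cos a + cos b \<le> 0" by auto
      then show ?thesis using Sk unfolding a_def b_def by simp
    qed
  qed
  have Mii0: "M i i \<ge> 0"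
  proof -
    have "(\<Sum>k\<in>S. K * cos (\<theta> i - \<theta> k)) = K * (\<Sum>k\<in>S. cos (\<theta> i - \<theta> k))"
      by (simp add: sum_distrib_left)
    also have "\<dots> \<le> 0" using csum K by (simp add: mult_nonneg_nonpos)
    finally show ?thesis using Mii by simp
  qed
  have Mij: "M i j = K * c" unfolding M_def stab_matrix_def c_def using ij eij by simp
  have eji: "E j i" using sg eij unfolding simple_graph_def by blast
  have cs: "cos (\<theta> j - \<theta> i) = cos (\<theta> i - \<theta> j)" by (metis cos_minus minus_diff_eq)
  have Mji: "M j i = K * c" unfolding M_def stab_matrix_def c_def using ij eji cs by simp
  define d where "d = M j j"
  define s where "s = K / (1 + \<bar>d\<bar>)"
  define t where "t = c * s"
  have s0: "s > 0" unfolding s_def using K by (simp add: add_pos_nonneg)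
  have sd: "s * \<bar>d\<bar> < K"
  proof -
    have "s * \<bar>d\<bar> = K * (\<bar>d\<bar> / (1 + \<bar>d\<bar>))" unfolding s_def by simp
    also have "\<dots> < K * 1" using K by (intro mult_strict_left_mono) auto
    finally show ?thesis by simp
  qed
  define x where "x = (\<lambda>l::nat. if l = i then 1 else if l = j then t else (0::real))"
  have "(\<Sum>l<n. \<Sum>m<n. x l * M l m * x m) = (\<Sum>l<n. x l * (\<Sum>m<n. x m * M l m))"
    by (simp add: sum_distrib_left mult.commute mult.left_commute)
  also have "\<dots> = (\<Sum>m<n. x m * M i m) + t * (\<Sum>m<n. x m * M j m)"
    unfolding x_def by (rule sum_sparse[OF ij])
  also have "\<dots> = (M i i + t * M i j) + t * (M j i + t * M j j)"
    unfolding x_def using sum_sparse[OF ij] by simp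
  also have "\<dots> = M i i + (c*c) * s * (2*K + s * d)"
    unfolding Mij Mji t_def d_def by (simp add: algebra_simps power2_eq_square)
  finally have Q: "(\<Sum>l<n. \<Sum>m<n. x l * M l m * x m) = M i i + (c*c) * s * (2*K + s * d)" .
  have "s * d \<ge> - (s * \<bar>d\<bar>)" 
  proof -
    have "s * (-\<bar>d\<bar>) \<le> s * d" by (rule mult_left_mono) (use s0 in auto)
    then show ?thesis by simp
  qed
  then have "2*K + s*d > 0" using sd K by linarith
  moreover have "c*c > 0" using neg c_def by (simp add: mult_neg_neg)
  ultimately have "(c*c) * s * (2*K + s * d) > 0" using s0 by simp
  then have "(\<Sum>l<n. \<Sum>m<n. x l * M l m * x m) > 0" using Q Mii0 by linarith
  moreover have "(\<Sum>l<n. \<Sum>m<n. x l * M l m * x m) \<le> 0"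
    using st unfolding kuramoto_stable_def neg_semidef_def M_def by blast
  ultimately show False by linarith
qed

theorem lemma2:
  fixes n :: nat and E :: "nat \<Rightarrow> nat \<Rightarrow> bool" and K :: real and \<theta> :: "nat \<Rightarrow> real"
  assumes "simple_graph n E"
    and "graph_connected n E"
    and "\<forall>i j. E i j \<longrightarrow> \<not> (degree n E i \<ge> 3 \<and> degree n E j \<ge> 3)"
    and "K > 0"
    and "kuramoto_fixed_point n E \<theta>"
    and "kuramoto_stable n E K \<theta>"
  shows "\<forall>i j. E i j \<longrightarrow> wrap_angle (\<theta> i - \<theta> j) \<in> {- pi / 2 .. pi / 2}"
proof (intro allI impI)
  fix i j assume e: "E i j"
  have eji: "E j i" using assms(1) e unfolding simple_graph_def by blast
  have "cos (\<theta> i - \<theta> j) \<ge> 0"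
  proof (rule ccontr)
    assume n: "\<not> cos (\<theta> i - \<theta> j) \<ge> 0"
    have "degree n E i \<le> 2 \<or> degree n E j \<le> 2" using assms(3) e by fastforce
    then show False
    proof
      assume "degree n E i \<le> 2"
      then show False using key[OF assms(1,4,5,6) e] n by simp
    next
      assume "degree n E j \<le> 2"
      moreover have "cos (\<theta> j - \<theta> i) < 0" using n
        by (metis cos_minus minus_diff_eq not_le)
      ultimately show False using key[OF assms(1,4,5,6) eji] by simp
    qed
  qed
  then show "wrap_angle (\<theta> i - \<theta> j) \<in> {- pi / 2 .. pi / 2}" by (rule wrap_ok)
qed

end
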